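(* Consider problem (P) in the setting $\mathbb Y=\mathbb R^m$, $m=m_1+m_2$, $C=\mathbb R^{m_1}_-\times\{0\}^{m_2}$ (no assumption on $D$). Let $\bar w\in\mathbb W$ be a feasible point of (P) at which RCPLD holds. Then $\bar w$ is AM-regular.
   Context: Standing setting: $\mathbb W,\mathbb Y$ are Euclidean spaces; problem (P) is $\min_w f(w)$ s.t. $G(w)\in C$, $w\in D$, where $f\colon\mathbb W\to\mathbb R$ and $G\colon\mathbb W\to\mathbb Y$ are continuously differentiable, $C\subset\mathbb Y$ is nonempty, closed, convex, and $D\subset\mathbb W$ is nonempty and closed. $G'(w)^*$ denotes the adjoint of the derivative. For a closed set $D$, $\Pi_D(x)$ is the (possibly multivalued) Euclidean projection onto $D$, and the limiting normal cone at $\bar w\in D$ is $\mathcal N^{\lim}_D(\bar w):=\limsup_{w\to\bar w}\operatorname{cone}(w-\Pi_D(w))$ (outer/Painlevé–Kuratowski limit), with $\mathcal N^{\lim}_D(w)=\varnothing$ for $w\notin D$. $\mathcal N_C$ is the normal cone of convex analysis ($\varnothing$ outside $C$). A feasible $\bar w$ is AM-regular if $\limsup_{w\to\bar w,\,z\to0}\mathcal M(w,z)\subset\mathcal M(\bar w,0)$, where $\mathcal M(w,z):=G'(w)^*\mathcal N_C(G(w)-z)+\mathcal N^{\lim}_D(w)$. In the present setting $G=(G_1,\dots,G_m)$, $I(\bar w):=\{i\in\{1,\dots,m_1\}: G_i(\bar w)=0\}$, $J:=\{m_1+1,\dots,m\}$. RCPLD holds at feasible $\bar w$ if: (i) the family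 $(\nabla G_i(w))_{i\in J}$ has constant rank for all $w$ in a neighborhood of $\bar w$; (ii) there is $S\subset J$ such that $(\nabla G_i(\bar w))_{i\in S}$ is a basis of $\operatorname{span}\{\nabla G_i(\bar w): i\in J\}$; (iii) for each $I\subset I(\bar w)$, each choice of multipliers $\lambda_i\ge0$ ($i\in I$), $\lambda_i\in\mathbb R$ ($i\in S$), not all zero, and each $\eta\in\mathcal N^{\lim}_D(\bar w)$ with $0=\sum_{i\in I\cup S}\lambda_i\nabla G_i(\bar w)+\eta$, there are neighborhoods $U$ of $\bar w$ and $V$ of $\eta$ such that for all $w\in U$ and $\tilde\eta\in\mathcal N^{\lim}_D(w)\cap V$ the vectors $(\nabla G_i(w))_{i\in I\cup S},\tilde\eta$ (if $\tilde\eta\ne0$), resp. $(\nabla G_i(w))_{i\in I\cup S}$ (if $\tilde\eta=0$), are linearly dependent. *)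

theory Defs
  imports "HOL-Analysis.Analysis"
begin

text \<open>The space Y = R^m is represented by functions nat => real that vanish
outside the index range {1..m}; its inner product is the sum over {1..m}.\<close>

definition Ycar :: "nat \<Rightarrow> (nat \<Rightarrow> real) set" where
  "Ycar m = {y. \<forall>i. i \<notin> {1..m} \<longrightarrow> y i = 0}"

definition innerY :: "nat \<Rightarrow> (nat \<Rightarrow> real) \<Rightarrow> (nat \<Rightarrow> real) \<Rightarrow> real" where
  "innerY m u v = (\<Sum>i\<in>{1..m}. u i * v i)"

definition Cset :: "nat \<Rightarrow> nat \<Rightarrow> (nat \<Rightarrow> real) set" where
  "Cset m1 m2 = {y \<in> Ycar (m1 + m2). (\<forall>i\<in>{1..m1}. y i \<le> 0) \<and> (\<forall>i\<in>{m1+1..m1+m2}. y i = 0)}"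

definition ncone_conv :: "nat \<Rightarrow> (nat \<Rightarrow> real) set \<Rightarrow> (nat \<Rightarrow> real) \<Rightarrow> (nat \<Rightarrow> real) set" where
  "ncone_conv m C y = (if y \<in> C then {v \<in> Ycar m. \<forall>c\<in>C. innerY m v (c - y) \<le> 0} else {})"

definition proj_set :: "'a::metric_space set \<Rightarrow> 'a \<Rightarrow> 'a set" where
  "proj_set D x = {p \<in> D. \<forall>q\<in>D. dist x p \<le> dist x q}"

text \<open>Limiting normal cone: outer (Painleve-Kuratowski) limit of cone(w - Pi_D(w)) as w -> wb;
  empty outside D.\<close>
definition ncone_lim :: "'a::real_normed_vector set \<Rightarrow> 'a \<Rightarrow> 'a set" where
  "ncone_lim D wb = (if wb \<in> D then
     {v. \<exists>w u. w \<longlonglongrightarrow> wb \<and> u \<longlonglongrightarrow> v \<and>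
        (\<forall>k. u k \<in> {t *\<^sub>R (w k - p) | t p. t \<ge> 0 \<and> p \<in> proj_set D (w k)})}
   else {})"

definition Gvec :: "nat \<Rightarrow> (nat \<Rightarrow> 'a \<Rightarrow> real) \<Rightarrow> 'a \<Rightarrow> (nat \<Rightarrow> real)" where
  "Gvec m G w = (\<lambda>i. if i \<in> {1..m} then G i w else 0)"

text \<open>Adjoint of the derivative G'(w)^* applied to lambda in Y, where G' i w is the gradient of G i at w.\<close>
definition adjG :: "nat \<Rightarrow> (nat \<Rightarrow> 'a \<Rightarrow> 'a::real_vector) \<Rightarrow> 'a \<Rightarrow> (nat \<Rightarrow> real) \<Rightarrow> 'a" where
  "adjG m G' w l = (\<Sum>i\<in>{1..m}. l i *\<^sub>R G' i w)"

definition Mset :: "nat \<Rightarrow> nat \<Rightarrow> (nat \<Rightarrow> 'a \<Rightarrow> real) \<Rightarrow> (nat \<Rightarrow> 'a \<Rightarrow> 'a::real_normed_vector)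
    \<Rightarrow> 'a set \<Rightarrow> 'a \<Rightarrow> (nat \<Rightarrow> real) \<Rightarrow> 'a set" where
  "Mset m1 m2 G G' D w z =
     {adjG (m1 + m2) G' w l + e | l e.
        l \<in> ncone_conv (m1 + m2) (Cset m1 m2) (Gvec (m1 + m2) G w - z) \<and> e \<in> ncone_lim D w}"

definition AM_regular :: "nat \<Rightarrow> nat \<Rightarrow> (nat \<Rightarrow> 'a \<Rightarrow> real) \<Rightarrow> (nat \<Rightarrow> 'a \<Rightarrow> 'a::real_normed_vector)
    \<Rightarrow> 'a set \<Rightarrow> 'a \<Rightarrow> bool" where
  "AM_regular m1 m2 G G' D wb \<longleftrightarrow>
     {v. \<exists>w z u. w \<longlonglongrightarrow> wb \<and> (\<forall>k. z k \<in> Ycar (m1 + m2)) \<and>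
          (\<forall>i. (\<lambda>k. z k i) \<longlonglongrightarrow> 0) \<and> u \<longlonglongrightarrow> v \<and>
          (\<forall>k. u k \<in> Mset m1 m2 G G' D (w k) (z k))}
     \<subseteq> Mset m1 m2 G G' D wb (\<lambda>_. 0)"

definition lindep_fam :: "nat set \<Rightarrow> (nat \<Rightarrow> 'a::real_vector) \<Rightarrow> bool" where
  "lindep_fam S v \<longleftrightarrow> (\<exists>c. (\<exists>i\<in>S. c i \<noteq> 0) \<and> (\<Sum>i\<in>S. c i *\<^sub>R v i) = 0)"

definition lindep_with :: "nat set \<Rightarrow> (nat \<Rightarrow> 'a::real_vector) \<Rightarrow> 'a \<Rightarrow> bool" where
  "lindep_with S v e \<longleftrightarrow>
     (\<exists>c t. (t \<noteq> 0 \<or> (\<exists>i\<in>S. c i \<noteq> 0)) \<and> (\<Sum>i\<in>S. c i *\<^sub>R v i) + t *\<^sub>R e = 0)"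

definition Iact :: "nat \<Rightarrow> (nat \<Rightarrow> 'a \<Rightarrow> real) \<Rightarrow> 'a \<Rightarrow> nat set" where
  "Iact m1 G wb = {i \<in> {1..m1}. G i wb = 0}"

definition Jset :: "nat \<Rightarrow> nat \<Rightarrow> nat set" where
  "Jset m1 m2 = {m1+1..m1+m2}"

definition RCPLD :: "nat \<Rightarrow> nat \<Rightarrow> (nat \<Rightarrow> 'a \<Rightarrow> real) \<Rightarrow> (nat \<Rightarrow> 'a \<Rightarrow> 'a::euclidean_space)
    \<Rightarrow> 'a set \<Rightarrow> 'a \<Rightarrow> bool" where
  "RCPLD m1 m2 G G' D wb \<longleftrightarrow>
     (\<exists>U. open U \<and> wb \<in> U \<and>
        (\<forall>w\<in>U. dim ((\<lambda>i. G' i w) ` Jset m1 m2) = dim ((\<lambda>i. G' i wb) ` Jset m1 m2))) \<and>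
     (\<exists>S \<subseteq> Jset m1 m2.
        \<not> lindep_fam S (\<lambda>i. G' i wb) \<and>
        span ((\<lambda>i. G' i wb) ` S) = span ((\<lambda>i. G' i wb) ` Jset m1 m2) \<and>
        (\<forall>I \<subseteq> Iact m1 G wb. \<forall>l eta.
           (\<forall>i\<in>I. l i \<ge> 0) \<and> (\<exists>i\<in>I \<union> S. l i \<noteq> 0) \<and> eta \<in> ncone_lim D wb \<and>
           (\<Sum>i\<in>I \<union> S. l i *\<^sub>R G' i wb) + eta = 0 \<longrightarrow>
           (\<exists>U V. open U \<and> wb \<in> U \<and> open V \<and> eta \<in> V \<and>
              (\<forall>w\<in>U. \<forall>e\<in>ncone_lim D w \<inter> V.
                 (e \<noteq> 0 \<longrightarrow> lindep_with (I \<union> S) (\<lambda>i. G' i w) e) \<and>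
                 (e = 0 \<longrightarrow> lindep_fam (I \<union> S) (\<lambda>i. G' i w))))))"

end

theory Submission
  imports Defs
begin



lemma carath:
  fixes v :: "nat \<Rightarrow> 'a::real_vector"
  assumes "finite P" "finite E" "P \<inter> E = {}" "\<not> lindep_fam E v" "\<forall>i\<in>P. c i \<ge> 0"
  shows "\<exists>P' c'. P' \<subseteq> P \<and> (\<forall>i\<in>P'. c' i \<ge> 0) \<and>
     (\<Sum>i\<in>P'\<union>E. c' i *\<^sub>R v i) = (\<Sum>i\<in>P\<union>E. c i *\<^sub>R v i) \<and> \<not> lindep_fam (P'\<union>E) v"
  using assms
proof (induction "card P" arbitrary: P c rule: less_induct)
  case less
  show ?case
  proof (cases "lindep_fam (P \<union> E) v")
    case False
    then show ?thesis using less.prems by blast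
  next
    case True
    then obtain d where d: "\<exists>i\<in>P\<union>E. d i \<noteq> 0" "(\<Sum>i\<in>P\<union>E. d i *\<^sub>R v i) = 0"
      unfolding lindep_fam_def by blast
    have sumsplit: "\<And>f. (\<Sum>i\<in>P\<union>E. f i) = (\<Sum>i\<in>P. f i) + (\<Sum>i\<in>E. f i)"
      using less.prems by (simp add: sum.union_disjoint)
    have "\<exists>i\<in>P. d i \<noteq> 0"
    proof (rule ccontr)
      assume "\<not> ?thesis"
      then have "(\<Sum>i\<in>P. d i *\<^sub>R v i) = 0" by simp
      then have "(\<Sum>i\<in>E. d i *\<^sub>R v i) = 0" using d(2) sumsplit[of "\<lambda>i. d i *\<^sub>R v i"] by simp
      moreover have "\<exists>i\<in>E. d i \<noteq> 0" using d(1) \<open>\<not> (\<exists>i\<in>P. d i \<noteq> 0)\<close> by blast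
      ultimately show False using less.prems(4) unfolding lindep_fam_def by blast
    qed
    then obtain i1 where i1: "i1 \<in> P" "d i1 \<noteq> 0" by blast
    define d' where "d' = (if d i1 > 0 then d else (\<lambda>i. - d i))"
    have d'1: "d' i1 > 0" using i1 by (auto simp: d'_def)
    have d'2: "(\<Sum>i\<in>P\<union>E. d' i *\<^sub>R v i) = 0"
      using d(2) by (auto simp: d'_def sum_negf)
    define Q where "Q = {i\<in>P. d' i > 0}"
    have Qf: "finite Q" "Q \<noteq> {}" using less.prems(1) i1 d'1 by (auto simp: Q_def)
    define \<tau> where "\<tau> = Min ((\<lambda>i. c i / d' i) ` Q)"
    obtain i0 where i0: "i0 \<in> Q" "\<tau> = c i0 / d' i0"
    proof -
      have "\<tau> \<in> (\<lambda>i. c i / d' i) ` Q" unfolding \<tau>_def using Qf by (intro Min_in) auto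
      then show ?thesis using that by blast
    qed
    have tle: "\<And>i. i \<in> Q \<Longrightarrow> \<tau> \<le> c i / d' i" unfolding \<tau>_def using Qf by auto
    have i0P: "i0 \<in> P" "d' i0 > 0" using i0 by (auto simp: Q_def)
    have tpos: "\<tau> \<ge> 0" using i0 i0P less.prems(5) by auto
    define c'' where "c'' = (\<lambda>i. c i - \<tau> * d' i)"
    have c''0: "c'' i0 = 0" using i0 i0P by (simp add: c''_def)
    have c''pos: "\<forall>i\<in>P - {i0}. c'' i \<ge> 0"
    proof
      fix i assume i: "i \<in> P - {i0}"
      show "c'' i \<ge> 0"
      proof (cases "d' i > 0")
        case True
        then have "\<tau> \<le> c i / d' i" using tle i by (auto simp: Q_def)
        then have "\<tau> * d' i \<le> c i" using True by (simp add: pos_le_divide_eq)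
        then show ?thesis by (simp add: c''_def)
      next
        case False
        then have "\<tau> * d' i \<le> 0" using tpos by (simp add: mult_nonneg_nonpos)
        moreover have "c i \<ge> 0" using less.prems(5) i by auto
        ultimately show ?thesis by (simp add: c''_def)
      qed
    qed
    have eq1: "(\<Sum>i\<in>P\<union>E. c'' i *\<^sub>R v i) = (\<Sum>i\<in>P\<union>E. c i *\<^sub>R v i)"
    proof -
      have "(\<Sum>i\<in>P\<union>E. c'' i *\<^sub>R v i) = (\<Sum>i\<in>P\<union>E. c i *\<^sub>R v i) - \<tau> *\<^sub>R (\<Sum>i\<in>P\<union>E. d' i *\<^sub>R v i)"
        by (simp add: c''_def scaleR_diff_left sum_subtractf scaleR_sum_right)
      then show ?thesis using d'2 by simp
    qed
    have eq2: "(\<Sum>i\<in>(P-{i0})\<union>E. c'' i *\<^sub>R v i) = (\<Sum>i\<in>P\<union>E. c'' i *\<^sub>R v i)"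
    proof -
      have "P \<union> E = insert i0 ((P-{i0})\<union>E)" using i0P by auto
      moreover have "i0 \<notin> (P-{i0})\<union>E" using i0P less.prems(3) by auto
      moreover have "finite ((P-{i0})\<union>E)" using less.prems by auto
      ultimately show ?thesis using c''0 by simp
    qed
    have "card (P - {i0}) < card P" using i0P less.prems(1) by (meson card_Diff1_less)
    then obtain P' c' where "P' \<subseteq> P - {i0}" "\<forall>i\<in>P'. c' i \<ge> 0"
      "(\<Sum>i\<in>P'\<union>E. c' i *\<^sub>R v i) = (\<Sum>i\<in>(P-{i0})\<union>E. c'' i *\<^sub>R v i)" "\<not> lindep_fam (P'\<union>E) v"
      using less.hyps[of "P - {i0}" c''] less.prems c''pos by auto
    then show ?thesis using eq1 eq2 by (metis Diff_subset order_trans)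
  qed
qed



lemma ncone_lim_D: "e \<in> ncone_lim D w \<Longrightarrow> w \<in> D"
  unfolding ncone_lim_def by (auto split: if_splits)

definition pcone :: "'a::real_normed_vector set \<Rightarrow> 'a \<Rightarrow> 'a set" where
  "pcone D W = {t *\<^sub>R (W - p) | t p. t \<ge> 0 \<and> p \<in> proj_set D W}"

lemma ncone_lim_iff:
  assumes "w \<in> D"
  shows "e \<in> ncone_lim D w \<longleftrightarrow> (\<exists>W U. W \<longlonglongrightarrow> w \<and> U \<longlonglongrightarrow> e \<and>
        (\<forall>k. U k \<in> pcone D (W k)))"
  using assms unfolding ncone_lim_def pcone_def by simp

lemma ncone_lim_zero:
  fixes D :: "'a::real_normed_vector set"
  assumes "w \<in> D" shows "0 \<in> ncone_lim D w"
proof -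
  have "w \<in> proj_set D w" using assms by (simp add: proj_set_def)
  then have "\<forall>k::nat. (\<lambda>k. 0::'a) k \<in> pcone D ((\<lambda>k. w) k)"
    by (auto simp: pcone_def intro!: exI[of _ "0::real"])
  moreover have "(\<lambda>k::nat. w) \<longlonglongrightarrow> w" "(\<lambda>k::nat. 0::'a) \<longlonglongrightarrow> 0" by auto
  ultimately show ?thesis unfolding ncone_lim_iff[OF assms] by blast
qed

lemma ncone_lim_scale:
  fixes D :: "'a::real_normed_vector set"
  assumes "e \<in> ncone_lim D w" "s \<ge> 0" shows "s *\<^sub>R e \<in> ncone_lim D w"
proof -
  have wD: "w \<in> D" using assms ncone_lim_D by blast
  obtain W U where WU: "W \<longlonglongrightarrow> w" "U \<longlonglongrightarrow> e"
    "\<forall>k. U k \<in> pcone D (W k)"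
    using assms(1) wD unfolding ncone_lim_iff[OF wD] by auto
  have "(\<lambda>k. s *\<^sub>R U k) \<longlonglongrightarrow> s *\<^sub>R e" using WU(2) by (intro tendsto_intros)
  moreover have "\<forall>k. s *\<^sub>R U k \<in> pcone D (W k)"
  proof
    fix k
    obtain t p where "U k = t *\<^sub>R (W k - p)" "t \<ge> 0" "p \<in> proj_set D (W k)" using WU(3)[rule_format, of k] unfolding pcone_def by blast
    then show "s *\<^sub>R U k \<in> pcone D (W k)"
      using assms(2) by (auto simp: pcone_def intro!: exI[of _ "s*t"] exI[of _ p])
  qed
  ultimately show ?thesis unfolding ncone_lim_iff[OF wD] using WU(1) by blast
qed

lemma seq_close:
  fixes X Y :: "nat \<Rightarrow> 'a::real_normed_vector"
  assumes "\<And>k. dist (X k) (Y k) < 1 / real (Suc k)" "Y \<longlonglongrightarrow> L"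
  shows "X \<longlonglongrightarrow> L"
proof -
  have "(\<lambda>k. X k - Y k) \<longlonglongrightarrow> 0" using assms(1) by (intro LIMSEQ_norm_0) (simp add: dist_norm)
  then have "(\<lambda>k. (X k - Y k) + Y k) \<longlonglongrightarrow> 0 + L" using assms(2) by (intro tendsto_add)
  then show ?thesis by simp
qed

lemma ncone_lim_closed:
  fixes D :: "'a::real_normed_vector set"
  assumes "w \<longlonglongrightarrow> wb" "e \<longlonglongrightarrow> eb" "\<forall>k. e k \<in> ncone_lim D (w k)" "wb \<in> D"
  shows "eb \<in> ncone_lim D wb"
proof -
  have "\<forall>k. \<exists>W U. dist W (w k) < 1 / real (Suc k) \<and> dist U (e k) < 1 / real (Suc k) \<and>
     U \<in> pcone D W"
  proof
    fix k
    have wD: "w k \<in> D" using assms(3) ncone_lim_D by blast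
    obtain W U where WU: "W \<longlonglongrightarrow> w k" "U \<longlonglongrightarrow> e k"
      "\<forall>n. U n \<in> pcone D (W n)"
      using assms(3) ncone_lim_iff[OF wD] by blast
    have pos: "(0::real) < 1 / real (Suc k)" by simp
    have "eventually (\<lambda>n. dist (W n) (w k) < 1 / real (Suc k)) sequentially"
      using WU(1) pos by (rule tendstoD)
    moreover have "eventually (\<lambda>n. dist (U n) (e k) < 1 / real (Suc k)) sequentially"
      using WU(2) pos by (rule tendstoD)
    ultimately have "eventually (\<lambda>n. dist (W n) (w k) < 1 / real (Suc k) \<and> dist (U n) (e k) < 1 / real (Suc k)) sequentially"
      by (rule eventually_conj)
    then obtain N where "\<forall>n\<ge>N. dist (W n) (w k) < 1 / real (Suc k) \<and> dist (U n) (e k) < 1 / real (Suc k)"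
      unfolding eventually_sequentially by blast
    then have "dist (W N) (w k) < 1 / real (Suc k) \<and> dist (U N) (e k) < 1 / real (Suc k)"
      by simp
    moreover have "U N \<in> pcone D (W N)" using WU(3) by simp
    ultimately show "\<exists>W U. dist W (w k) < 1 / real (Suc k) \<and> dist U (e k) < 1 / real (Suc k) \<and>
     U \<in> pcone D W" by (intro exI[of _ "W N"] exI[of _ "U N"]) simp
  qed
  then have "\<exists>W. \<forall>k. \<exists>U. dist (W k) (w k) < 1 / real (Suc k) \<and> dist U (e k) < 1 / real (Suc k) \<and>
     U \<in> pcone D (W k)" by (rule choice)
  then obtain W where "\<forall>k. \<exists>U. dist (W k) (w k) < 1 / real (Suc k) \<and> dist U (e k) < 1 / real (Suc k) \<and>
     U \<in> pcone D (W k)" by blast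
  then have "\<exists>U. \<forall>k. dist (W k) (w k) < 1 / real (Suc k) \<and> dist (U k) (e k) < 1 / real (Suc k) \<and>
     U k \<in> pcone D (W k)" by (rule choice)
  then obtain U where WU: "\<forall>k. dist (W k) (w k) < 1 / real (Suc k) \<and> dist (U k) (e k) < 1 / real (Suc k) \<and>
     U k \<in> pcone D (W k)" by blast
  have "W \<longlonglongrightarrow> wb" using WU assms(1) by (intro seq_close[of W w]) auto
  moreover have "U \<longlonglongrightarrow> eb" using WU assms(2) by (intro seq_close[of U e]) auto
  moreover have "\<forall>k. U k \<in> pcone D (W k)" using WU by blast
  ultimately show ?thesis unfolding ncone_lim_iff[OF assms(4)]
    by (intro exI[of _ W] exI[of _ U] conjI)
qed

lemma compact_fin:
  fixes f :: "nat \<Rightarrow> nat \<Rightarrow> real"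
  assumes "finite K" "\<forall>k. \<forall>i\<in>K. \<bar>f k i\<bar> \<le> B"
  shows "\<exists>r g. strict_mono r \<and> (\<forall>i\<in>K. (\<lambda>k. f (r k) i) \<longlonglongrightarrow> g i)"
  using assms(1,2)
proof (induction K rule: finite_induct)
  case empty
  then show ?case by (auto intro!: exI[of _ id] simp: strict_mono_def)
next
  case (insert j K)
  then obtain r g where rg: "strict_mono r" "\<forall>i\<in>K. (\<lambda>k. f (r k) i) \<longlonglongrightarrow> g i" by auto
  have bd: "bounded (range (\<lambda>k. f (r k) j))"
    using insert.prems by (intro boundedI[of _ B]) auto
  obtain l r2 where lr: "strict_mono r2" "((\<lambda>k. f (r k) j) \<circ> r2) \<longlonglongrightarrow> l"
    using bounded_imp_convergent_subsequence[OF bd] by blast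
  have "\<forall>i\<in>insert j K. (\<lambda>k. f ((r \<circ> r2) k) i) \<longlonglongrightarrow> (g(j := l)) i"
  proof
    fix i assume "i \<in> insert j K"
    show "(\<lambda>k. f ((r \<circ> r2) k) i) \<longlonglongrightarrow> (g(j := l)) i"
    proof (cases "i = j")
      case True then show ?thesis using lr by (simp add: o_def)
    next
      case False
      then have i: "i \<in> K" using \<open>i \<in> insert j K\<close> by auto
      then have "((\<lambda>k. f (r k) i) \<circ> r2) \<longlonglongrightarrow> g i" using rg lr by (intro LIMSEQ_subseq_LIMSEQ) auto
      then show ?thesis using False by (simp add: o_def)
    qed
  qed
  moreover have "strict_mono (r \<circ> r2)" using rg lr by (simp add: strict_mono_o)
  ultimately show ?case by blast
qed

lemma pigeon_subseq:
  fixes g :: "nat \<Rightarrow> 'b"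
  assumes "finite X" "\<forall>k. g k \<in> X"
  shows "\<exists>(r::nat\<Rightarrow>nat) x. strict_mono r \<and> (\<forall>k. g (r k) = x)"
proof -
  have "range g \<subseteq> X" using assms(2) by blast
  then have fr: "finite (range g)" using assms(1) by (rule finite_subset)
  obtain a0 where a0: "\<not> finite {a \<in> UNIV. g a = g a0}"
    using pigeonhole_infinite[OF infinite_UNIV_nat fr] by blast
  from infinite_enumerate[OF a0] obtain r :: "nat \<Rightarrow> nat" where r: "strict_mono r \<and> (\<forall>n. r n \<in> {a \<in> UNIV. g a = g a0})" ..
  have "\<forall>k. g (r k) = g a0" using r by simp
  then show ?thesis using r by blast
qed

lemma innerY_delta:
  assumes "i \<in> {1..m}"
  shows "innerY m l (\<lambda>j. if j = i then a else 0) = l i * a"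
proof -
  have "innerY m l (\<lambda>j. if j = i then a else 0) = (\<Sum>j\<in>{1..m}. if j = i then l i * a else 0)"
    unfolding innerY_def by (intro sum.cong) auto
  also have "\<dots> = l i * a" using assms by (simp add: sum.delta')
  finally show ?thesis .
qed

lemma nc_props:
  assumes "l \<in> ncone_conv (m1+m2) (Cset m1 m2) y"
  shows "y \<in> Cset m1 m2" "l \<in> Ycar (m1+m2)"
    "\<forall>i\<in>{1..m1}. l i \<ge> 0 \<and> (y i < 0 \<longrightarrow> l i = 0)"
proof -
  show yC: "y \<in> Cset m1 m2" using assms unfolding ncone_conv_def by (auto split: if_splits)
  then have l: "l \<in> Ycar (m1+m2)" "\<forall>c\<in>Cset m1 m2. innerY (m1+m2) l (c - y) \<le> 0"
    using assms unfolding ncone_conv_def by auto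
  then show "l \<in> Ycar (m1+m2)" by simp
  show "\<forall>i\<in>{1..m1}. l i \<ge> 0 \<and> (y i < 0 \<longrightarrow> l i = 0)"
  proof
    fix i assume i: "i \<in> {1..m1}"
    then have im: "i \<in> {1..m1+m2}" by auto
    have yi0: "y i \<le> 0" using yC i unfolding Cset_def by auto
    define c1 where "c1 = y(i := y i - 1)"
    have "c1 \<in> Cset m1 m2" using yC i yi0 unfolding c1_def Cset_def Ycar_def
      by (auto simp del: atLeastAtMost_iff) (auto simp: atLeastAtMost_iff)
    moreover have "c1 - y = (\<lambda>j. if j = i then -1 else 0)" by (auto simp: c1_def fun_eq_iff)
    ultimately have "l i * (-1) \<le> 0" using l(2) innerY_delta[OF im, of l "-1"] by metis
    then have g: "l i \<ge> 0" by simp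
    have "y i < 0 \<longrightarrow> l i = 0"
    proof
      assume yi: "y i < 0"
      define c2 where "c2 = y(i := 0)"
      have "c2 \<in> Cset m1 m2" using yC i unfolding c2_def Cset_def Ycar_def by auto
      moreover have "c2 - y = (\<lambda>j. if j = i then - y i else 0)" by (auto simp: c2_def fun_eq_iff)
      ultimately have "l i * (- y i) \<le> 0" using l(2) innerY_delta[OF im, of l "- y i"] by metis
      moreover have "l i > 0 \<Longrightarrow> l i * (- y i) > 0" using yi by (intro mult_pos_pos) auto
      ultimately have "l i \<le> 0" by linarith
      then show "l i = 0" using g by simp
    qed
    then show "l i \<ge> 0 \<and> (y i < 0 \<longrightarrow> l i = 0)" using g by simp
  qed
qed

lemma nc_build:
  fixes G :: "nat \<Rightarrow> 'a::real_vector \<Rightarrow> real" and G' :: "nat \<Rightarrow> 'a \<Rightarrow> 'a"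
  assumes "Gvec (m1+m2) G wb \<in> Cset m1 m2" "Ia = Iact m1 G wb" "S \<subseteq> Jset m1 m2"
    "\<forall>i\<in>Ia. a i \<ge> 0"
  defines "l \<equiv> (\<lambda>i. if i \<in> Ia \<union> S then a i else 0)"
  shows "l \<in> ncone_conv (m1+m2) (Cset m1 m2) (Gvec (m1+m2) G wb - (\<lambda>_. 0))"
    "adjG (m1+m2) G' wb l = (\<Sum>i\<in>Ia\<union>S. a i *\<^sub>R G' i wb)"
proof -
  have Ia: "Ia \<subseteq> {1..m1}" "\<forall>i\<in>Ia. G i wb = 0" using assms(2) by (auto simp: Iact_def)
  have S: "S \<subseteq> {m1+1..m1+m2}" using assms(3) by (simp add: Jset_def)
  have sub: "Ia \<union> S \<subseteq> {1..m1+m2}" using Ia S by auto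
  have eq: "Gvec (m1+m2) G wb - (\<lambda>_. 0) = Gvec (m1+m2) G wb" by (simp add: fun_eq_iff)
  have lY: "l \<in> Ycar (m1+m2)" using sub unfolding Ycar_def l_def by auto
  have "\<forall>c\<in>Cset m1 m2. innerY (m1+m2) l (c - Gvec (m1+m2) G wb) \<le> 0"
  proof
    fix c assume c: "c \<in> Cset m1 m2"
    have "\<forall>j\<in>{1..m1+m2}. l j * (c - Gvec (m1+m2) G wb) j \<le> 0"
    proof
      fix j assume j: "j \<in> {1..m1+m2}"
      show "l j * (c - Gvec (m1+m2) G wb) j \<le> 0"
      proof (cases "j \<in> Ia")
        case True
        then have "G j wb = 0" "c j \<le> 0" "j \<in> {1..m1}" using Ia c by (auto simp: Cset_def)
        then show ?thesis using True assms(4) j by (simp add: l_def Gvec_def mult_nonneg_nonpos)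
      next
        case False
        show ?thesis
        proof (cases "j \<in> S")
          case True
          then have "j \<in> {m1+1..m1+m2}" using S by auto
          then have "c j = 0" "Gvec (m1+m2) G wb j = 0" using c assms(1) by (auto simp: Cset_def)
          then show ?thesis by simp
        next
          case False
          then show ?thesis using \<open>j \<notin> Ia\<close> by (simp add: l_def)
        qed
      qed
    qed
    then show "innerY (m1+m2) l (c - Gvec (m1+m2) G wb) \<le> 0"
      unfolding innerY_def by (intro sum_nonpos) auto
  qed
  then show "l \<in> ncone_conv (m1+m2) (Cset m1 m2) (Gvec (m1+m2) G wb - (\<lambda>_. 0))"
    unfolding eq ncone_conv_def using assms(1) lY by simp
  have "adjG (m1+m2) G' wb l = (\<Sum>i\<in>Ia\<union>S. l i *\<^sub>R G' i wb)"
    unfolding adjG_def using sub by (intro sum.mono_neutral_cong_right) (auto simp: l_def)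
  also have "\<dots> = (\<Sum>i\<in>Ia\<union>S. a i *\<^sub>R G' i wb)" by (intro sum.cong) (auto simp: l_def)
  finally show "adjG (m1+m2) G' wb l = (\<Sum>i\<in>Ia\<union>S. a i *\<^sub>R G' i wb)" .
qed

lemma lindep_cong:
  assumes "\<forall>i\<in>A. V i = V' i"
  shows "lindep_fam A V = lindep_fam A V'"
proof -
  have "\<And>c. (\<Sum>i\<in>A. c i *\<^sub>R V i) = (\<Sum>i\<in>A. c i *\<^sub>R V' i)" using assms by (intro sum.cong) auto
  then show ?thesis unfolding lindep_fam_def by simp
qed

lemma lindep_mono:
  assumes "lindep_fam A V" "A \<subseteq> B" "finite B"
  shows "lindep_fam B V"
proof -
  obtain c where c: "\<exists>i\<in>A. c i \<noteq> 0" "(\<Sum>i\<in>A. c i *\<^sub>R V i) = 0" using assms(1) unfolding lindep_fam_def by blast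
  define d where "d = (\<lambda>i. if i \<in> A then c i else 0)"
  have "(\<Sum>i\<in>B. d i *\<^sub>R V i) = (\<Sum>i\<in>A. c i *\<^sub>R V i)"
    using assms(2,3) unfolding d_def by (intro sum.mono_neutral_cong_right) auto
  moreover have "\<exists>i\<in>B. d i \<noteq> 0" using c(1) assms(2) unfolding d_def by auto
  ultimately show ?thesis unfolding lindep_fam_def using c(2) by metis
qed

lemma indep_image:
  fixes V :: "nat \<Rightarrow> 'a::real_vector"
  assumes "finite S" "\<not> lindep_fam S V"
  shows "inj_on V S" "independent (V ` S)"
proof -
  show inj: "inj_on V S"
  proof (rule inj_onI, rule ccontr)
    fix i j assume ij: "i \<in> S" "j \<in> S" "V i = V j" "i \<noteq> j"
    define c where "c = (\<lambda>k. if k = i then 1 else if k = j then -1 else (0::real))"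
    have "(\<Sum>k\<in>S. c k *\<^sub>R V k) = (\<Sum>k\<in>{i,j}. c k *\<^sub>R V k)"
      using ij assms(1) by (intro sum.mono_neutral_cong_right) (auto simp: c_def)
    also have "\<dots> = V i - V j" using ij(4) by (simp add: c_def)
    also have "\<dots> = 0" using ij(3) by simp
    finally have s0: "(\<Sum>k\<in>S. c k *\<^sub>R V k) = 0" .
    have "c i \<noteq> 0" by (simp add: c_def)
    then have "lindep_fam S V" unfolding lindep_fam_def using ij(1) s0 by blast
    then show False using assms(2) by simp
  qed
  have fin: "finite (V ` S)" using assms(1) by simp
  show "independent (V ` S)"
  proof
    assume "dependent (V ` S)"
    then obtain c where h0: "\<exists>v\<in>V ` S. c v \<noteq> 0" "(\<Sum>v\<in>V ` S. c v *\<^sub>R v) = 0"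
      unfolding dependent_finite[OF fin] by blast
    then obtain x where h: "x \<in> V ` S" "c x \<noteq> 0" "(\<Sum>v\<in>V ` S. c v *\<^sub>R v) = 0" by blast
    have "(\<Sum>v\<in>V ` S. c v *\<^sub>R v) = (\<Sum>i\<in>S. c (V i) *\<^sub>R V i)"
      by (simp add: sum.reindex[OF inj] o_def)
    then have s0: "(\<Sum>i\<in>S. c (V i) *\<^sub>R V i) = 0" using h(3) by simp
    have nl: "\<And>d. (\<exists>i\<in>S. d i \<noteq> 0) \<Longrightarrow> (\<Sum>i\<in>S. d i *\<^sub>R V i) \<noteq> 0"
      using assms(2) unfolding lindep_fam_def by blast
    have "\<forall>i\<in>S. c (V i) = 0" using nl[of "\<lambda>i. c (V i)"] s0 by blast
    then show False using h(1,2) by auto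
  qed
qed

lemma span_S:
  fixes V :: "nat \<Rightarrow> 'a::euclidean_space"
  assumes "finite J" "S \<subseteq> J" "\<not> lindep_fam S V" "dim (V ` J) \<le> card S" "x \<in> span (V ` J)"
  shows "\<exists>c. x = (\<Sum>i\<in>S. c i *\<^sub>R V i)"
proof -
  have fS: "finite S" using assms(1,2) finite_subset by blast
  note ii = indep_image[OF fS assms(3)]
  have "dim (V ` S) = card S"
    using dim_eq_card_independent[OF ii(2)] card_image[OF ii(1)] by simp
  then have "span (V ` S) = span (V ` J)" using assms(2,4) by (intro dim_eq_span) auto
  then have "x \<in> span (V ` S)" using assms(5) by simp
  then obtain u where "x = (\<Sum>v\<in>V ` S. u v *\<^sub>R v)" using span_finite[of "V ` S"] fS by auto
  moreover have "(\<Sum>v\<in>V ` S. u v *\<^sub>R v) = (\<Sum>i\<in>S. u (V i) *\<^sub>R V i)"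
    by (simp add: sum.reindex[OF ii(1)] o_def)
  ultimately have "x = (\<Sum>i\<in>S. u (V i) *\<^sub>R V i)" by simp
  then show ?thesis by (intro exI[of _ "\<lambda>i. u (V i)"])
qed

lemma dim_wb:
  fixes V :: "nat \<Rightarrow> 'a::euclidean_space"
  assumes "finite S" "\<not> lindep_fam S V" "span (V ` S) = span (V ` J)"
  shows "dim (V ` J) = card S"
proof -
  note ii = indep_image[OF assms(1,2)]
  have "dim (V ` J) = dim (span (V ` J))" by (simp add: dim_span)
  also have "\<dots> = dim (span (V ` S))" using assms(3) by simp
  also have "\<dots> = dim (V ` S)" by (simp add: dim_span)
  also have "\<dots> = card S" using dim_eq_card_independent[OF ii(2)] card_image[OF ii(1)] by simp
  finally show ?thesis .
qed




lemma rep_k: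
  fixes G :: "nat \<Rightarrow> 'a::euclidean_space \<Rightarrow> real" and G' :: "nat \<Rightarrow> 'a \<Rightarrow> 'a"
  assumes x: "x \<in> Mset m1 m2 G G' D w z"
    and inact: "\<forall>i\<in>{1..m1} - Ia. G i w - z i < 0"
    and Ia: "Ia \<subseteq> {1..m1}" and S: "S \<subseteq> Jset m1 m2"
    and indS: "\<not> lindep_fam S (\<lambda>i. G' i w)"
    and dimJ: "dim ((\<lambda>i. G' i w) ` Jset m1 m2) \<le> card S"
  shows "\<exists>P c \<eta>. P \<subseteq> Ia \<and> (\<forall>i\<in>Ia. c i \<ge> 0) \<and> (\<forall>i\<in>Ia - P. c i = 0) \<and> \<eta> \<in> ncone_lim D w \<and>
     x = (\<Sum>i\<in>Ia\<union>S. c i *\<^sub>R G' i w) + \<eta> \<and> \<not> lindep_fam (P\<union>S) (\<lambda>i. G' i w) \<and>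
     (\<eta> \<noteq> 0 \<longrightarrow> (\<forall>s>0. \<not> lindep_with (P\<union>S) (\<lambda>i. G' i w) (s *\<^sub>R \<eta>)))"
proof -
  let ?m = "m1+m2"
  let ?J = "Jset m1 m2"
  obtain l e where le: "x = adjG ?m G' w l + e" "l \<in> ncone_conv ?m (Cset m1 m2) (Gvec ?m G w - z)"
    "e \<in> ncone_lim D w"
    using x unfolding Mset_def by blast
  have wD: "w \<in> D" using le(3) ncone_lim_D by blast
  note np = nc_props[OF le(2)]
  have lpos: "\<forall>i\<in>Ia. l i \<ge> 0" using np(3) Ia by auto
  have lz: "\<forall>i\<in>{1..m1} - Ia. l i = 0"
  proof
    fix i assume i: "i \<in> {1..m1} - Ia"
    have "(Gvec ?m G w - z) i = G i w - z i" using i by (simp add: Gvec_def)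
    then have "(Gvec ?m G w - z) i < 0" using inact i by simp
    then show "l i = 0" using np(3) i by auto
  qed
  have J: "?J = {m1+1..m1+m2}" by (simp add: Jset_def)
  have fJ: "finite ?J" by (simp add: Jset_def)
  have fIa: "finite Ia" using Ia finite_subset by blast
  have fS: "finite S" using S fJ finite_subset by blast
  have disj: "Ia \<inter> ?J = {}" using Ia J by auto
  have ad: "adjG ?m G' w l = (\<Sum>i\<in>Ia. l i *\<^sub>R G' i w) + (\<Sum>i\<in>?J. l i *\<^sub>R G' i w)"
  proof -
    have "adjG ?m G' w l = (\<Sum>i\<in>Ia \<union> ?J. l i *\<^sub>R G' i w)"
      unfolding adjG_def using Ia J lz by (intro sum.mono_neutral_cong_right) auto
    also have "\<dots> = (\<Sum>i\<in>Ia. l i *\<^sub>R G' i w) + (\<Sum>i\<in>?J. l i *\<^sub>R G' i w)"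
      using fIa fJ disj by (simp add: sum.union_disjoint)
    finally show ?thesis .
  qed
  have "(\<Sum>i\<in>?J. l i *\<^sub>R G' i w) \<in> span ((\<lambda>i. G' i w) ` ?J)"
    by (intro span_sum span_scale span_base) auto
  then obtain \<mu> where mu: "(\<Sum>i\<in>?J. l i *\<^sub>R G' i w) = (\<Sum>i\<in>S. \<mu> i *\<^sub>R G' i w)"
    using span_S[OF fJ S indS dimJ] by blast
  define v where "v = (\<lambda>i. if i = 0 then e else G' i w)"
  define c0 where "c0 = (\<lambda>i. if i = 0 then 1 else if i \<in> Ia then l i else \<mu> i)"
  have n0: "0 \<notin> Ia" "0 \<notin> S" using Ia S J by auto
  have IaS: "Ia \<inter> S = {}" using disj S by auto
  have vS: "\<not> lindep_fam S v"
  proof -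
    have "\<forall>i\<in>S. v i = G' i w" using n0 by (auto simp: v_def)
    then show ?thesis using indS lindep_cong[of S v "\<lambda>i. G' i w"] by simp
  qed
  have c0pos: "\<forall>i\<in>insert 0 Ia. c0 i \<ge> 0" using lpos by (auto simp: c0_def)
  have disj2: "insert 0 Ia \<inter> S = {}" using n0 IaS by auto
  have fI0: "finite (insert 0 Ia)" using fIa by simp
  obtain P' c' where P': "P' \<subseteq> insert 0 Ia" "\<forall>i\<in>P'. c' i \<ge> 0"
    "(\<Sum>i\<in>P'\<union>S. c' i *\<^sub>R v i) = (\<Sum>i\<in>insert 0 Ia \<union> S. c0 i *\<^sub>R v i)" "\<not> lindep_fam (P'\<union>S) v"
    using carath[OF fI0 fS disj2 vS c0pos] by iprover
  have xs: "(\<Sum>i\<in>insert 0 Ia \<union> S. c0 i *\<^sub>R v i) = x"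
  proof -
    have e1: "insert 0 Ia \<union> S = insert 0 (Ia \<union> S)" by auto
    have n0': "0 \<notin> Ia \<union> S" using n0 by auto
    have "(\<Sum>i\<in>insert 0 Ia \<union> S. c0 i *\<^sub>R v i) = c0 0 *\<^sub>R v 0 + (\<Sum>i\<in>Ia \<union> S. c0 i *\<^sub>R v i)"
      unfolding e1 using n0' fIa fS by (simp add: sum.insert)
    also have "c0 0 *\<^sub>R v 0 = e" by (simp add: c0_def v_def)
    also have "(\<Sum>i\<in>Ia \<union> S. c0 i *\<^sub>R v i) = (\<Sum>i\<in>Ia. c0 i *\<^sub>R v i) + (\<Sum>i\<in>S. c0 i *\<^sub>R v i)"
      using fIa fS IaS by (simp add: sum.union_disjoint)
    also have "(\<Sum>i\<in>Ia. c0 i *\<^sub>R v i) = (\<Sum>i\<in>Ia. l i *\<^sub>R G' i w)"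
      using n0 by (intro sum.cong) (auto simp: c0_def v_def)
    also have "(\<Sum>i\<in>S. c0 i *\<^sub>R v i) = (\<Sum>i\<in>S. \<mu> i *\<^sub>R G' i w)"
      using n0 IaS by (intro sum.cong) (auto simp: c0_def v_def)
    finally show ?thesis using le(1) ad mu by (simp add: algebra_simps)
  qed
  define P where "P = P' - {0}"
  define \<eta> where "\<eta> = (if 0 \<in> P' then c' 0 *\<^sub>R e else 0)"
  define c where "c = (\<lambda>i. if i \<in> P' \<union> S then c' i else 0)"
  have PIa: "P \<subseteq> Ia" using P'(1) by (auto simp: P_def)
  have fPS: "finite (P \<union> S)" using PIa fIa fS finite_subset by blast
  have n0P: "0 \<notin> P \<union> S" using n0 by (auto simp: P_def)
  have vPS: "\<forall>i\<in>P\<union>S. v i = G' i w" using n0P by (auto simp: v_def)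
  have cpos: "\<forall>i\<in>Ia. c i \<ge> 0" using P'(2) IaS by (auto simp: c_def)
  have czero: "\<forall>i\<in>Ia - P. c i = 0" using n0 IaS by (auto simp: c_def P_def)
  have eta_in: "\<eta> \<in> ncone_lim D w"
  proof (cases "0 \<in> P'")
    case True
    then show ?thesis using ncone_lim_scale[OF le(3)] P'(2) by (simp add: \<eta>_def)
  next
    case False
    then show ?thesis using ncone_lim_zero[OF wD] by (simp add: \<eta>_def)
  qed
  have A: "(\<Sum>i\<in>Ia\<union>S. c i *\<^sub>R G' i w) = (\<Sum>i\<in>P\<union>S. c' i *\<^sub>R G' i w)"
  proof (intro sum.mono_neutral_cong_right)
    show "finite (Ia \<union> S)" using fIa fS by simp
    show "P \<union> S \<subseteq> Ia \<union> S" using PIa by auto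
    show "\<forall>i\<in>Ia \<union> S - (P \<union> S). c i *\<^sub>R G' i w = 0"
      using n0 by (auto simp: c_def P_def)
    show "\<And>i. i \<in> P \<union> S \<Longrightarrow> c i *\<^sub>R G' i w = c' i *\<^sub>R G' i w"
      by (auto simp: c_def P_def)
  qed
  have B: "(\<Sum>i\<in>P'\<union>S. c' i *\<^sub>R v i) = (\<Sum>i\<in>P\<union>S. c' i *\<^sub>R G' i w) + \<eta>"
  proof (cases "0 \<in> P'")
    case True
    have e1: "P' \<union> S = insert 0 (P \<union> S)" using True by (auto simp: P_def)
    have "(\<Sum>i\<in>P'\<union>S. c' i *\<^sub>R v i) = c' 0 *\<^sub>R v 0 + (\<Sum>i\<in>P\<union>S. c' i *\<^sub>R v i)"
      unfolding e1 using fPS n0P by (simp add: sum.insert)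
    also have "(\<Sum>i\<in>P\<union>S. c' i *\<^sub>R v i) = (\<Sum>i\<in>P\<union>S. c' i *\<^sub>R G' i w)"
      using vPS by (intro sum.cong) auto
    finally show ?thesis using True by (simp add: \<eta>_def v_def)
  next
    case False
    then have "P' \<union> S = P \<union> S" by (auto simp: P_def)
    moreover have "(\<Sum>i\<in>P\<union>S. c' i *\<^sub>R v i) = (\<Sum>i\<in>P\<union>S. c' i *\<^sub>R G' i w)"
      using vPS by (intro sum.cong) auto
    ultimately show ?thesis using False by (simp add: \<eta>_def)
  qed
  have xeq: "x = (\<Sum>i\<in>Ia\<union>S. c i *\<^sub>R G' i w) + \<eta>"
  proof -
    have "x = (\<Sum>i\<in>P'\<union>S. c' i *\<^sub>R v i)" using P'(3) xs by (metis)
    also have "\<dots> = (\<Sum>i\<in>P\<union>S. c' i *\<^sub>R G' i w) + \<eta>" by (rule B)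
    also have "\<dots> = (\<Sum>i\<in>Ia\<union>S. c i *\<^sub>R G' i w) + \<eta>" by (simp only: A)
    finally show ?thesis .
  qed
  have "finite P'" by (rule finite_subset[OF P'(1) fI0])
  then have fP'S: "finite (P' \<union> S)" using fS by simp
  have ind1: "\<not> lindep_fam (P\<union>S) (\<lambda>i. G' i w)"
  proof
    assume "lindep_fam (P\<union>S) (\<lambda>i. G' i w)"
    then have "lindep_fam (P\<union>S) v" using lindep_cong[of "P\<union>S" v "\<lambda>i. G' i w"] vPS by simp
    moreover have "P \<union> S \<subseteq> P' \<union> S" by (auto simp: P_def)
    ultimately have "lindep_fam (P'\<union>S) v" using fP'S by (rule lindep_mono)
    then show False using P'(4) by simp
  qed
  have ind2: "\<eta> \<noteq> 0 \<longrightarrow> (\<forall>s>0. \<not> lindep_with (P\<union>S) (\<lambda>i. G' i w) (s *\<^sub>R \<eta>))"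
  proof (intro impI allI notI)
    fix s :: real
    assume h: "\<eta> \<noteq> 0" "s > 0" "lindep_with (P\<union>S) (\<lambda>i. G' i w) (s *\<^sub>R \<eta>)"
    then have h0: "0 \<in> P'" by (auto simp: \<eta>_def split: if_splits)
    then have etae: "\<eta> = c' 0 *\<^sub>R e" by (simp add: \<eta>_def)
    then have c'0: "c' 0 \<noteq> 0" using h(1) by auto
    obtain d t where dt: "t \<noteq> 0 \<or> (\<exists>i\<in>P\<union>S. d i \<noteq> 0)"
      "(\<Sum>i\<in>P\<union>S. d i *\<^sub>R G' i w) + t *\<^sub>R (s *\<^sub>R \<eta>) = 0"
      using h(3) unfolding lindep_with_def by blast
    define d' where "d' = d(0 := t * s * c' 0)"
    have e1: "P' \<union> S = insert 0 (P \<union> S)" using h0 by (auto simp: P_def)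
    have "(\<Sum>i\<in>P'\<union>S. d' i *\<^sub>R v i) = d' 0 *\<^sub>R v 0 + (\<Sum>i\<in>P\<union>S. d' i *\<^sub>R v i)"
      unfolding e1 using fPS n0P by (simp add: sum.insert)
    also have "(\<Sum>i\<in>P\<union>S. d' i *\<^sub>R v i) = (\<Sum>i\<in>P\<union>S. d i *\<^sub>R G' i w)"
      using vPS n0P by (intro sum.cong) (auto simp: d'_def)
    also have "d' 0 *\<^sub>R v 0 = t *\<^sub>R (s *\<^sub>R \<eta>)" by (simp add: d'_def v_def etae)
    finally have s0: "(\<Sum>i\<in>P'\<union>S. d' i *\<^sub>R v i) = 0" using dt(2) by (simp add: add.commute)
    have "\<exists>i\<in>P'\<union>S. d' i \<noteq> 0"
    proof (cases "t = 0")
      case False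
      then have "d' 0 \<noteq> 0" using h(2) c'0 by (simp add: d'_def)
      then show ?thesis using h0 by blast
    next
      case True
      then obtain i where "i \<in> P\<union>S" "d i \<noteq> 0" using dt(1) by blast
      then have "i \<in> P'\<union>S" "d' i \<noteq> 0" using n0P by (auto simp: d'_def P_def)
      then show ?thesis by blast
    qed
    then have "lindep_fam (P'\<union>S) v" unfolding lindep_fam_def using s0 by blast
    then show False using P'(4) by simp
  qed
  show ?thesis
    using PIa cpos czero eta_in xeq ind1 ind2 by blast
qed



lemma sum_abs_pos:
  fixes c :: "nat \<Rightarrow> real"
  assumes "finite S" "i \<in> S" "c i \<noteq> 0"
  shows "(\<Sum>j\<in>S. \<bar>c j\<bar>) > 0"
proof -
  have "\<bar>c i\<bar> \<le> (\<Sum>j\<in>S. \<bar>c j\<bar>)" using assms(1,2) by (intro member_le_sum) auto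
  moreover have "\<bar>c i\<bar> > 0" using assms(3) by simp
  ultimately show ?thesis by linarith
qed

lemma lindep_limit:
  fixes V :: "nat \<Rightarrow> nat \<Rightarrow> 'a::real_normed_vector"
  assumes fS: "finite S" and lim: "\<forall>i\<in>S. (\<lambda>k. V k i) \<longlonglongrightarrow> Vb i" and dep: "\<forall>k. lindep_fam S (V k)"
  shows "lindep_fam S Vb"
proof -
  have "\<forall>k. \<exists>c. (\<exists>i\<in>S. c i \<noteq> 0) \<and> (\<Sum>i\<in>S. c i *\<^sub>R V k i) = 0"
    using dep unfolding lindep_fam_def by blast
  then have "\<exists>C. \<forall>k. (\<exists>i\<in>S. C k i \<noteq> 0) \<and> (\<Sum>i\<in>S. C k i *\<^sub>R V k i) = 0" by (rule choice)
  then obtain C where C: "\<forall>k. (\<exists>i\<in>S. C k i \<noteq> 0) \<and> (\<Sum>i\<in>S. C k i *\<^sub>R V k i) = 0" by blast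
  define n where "n = (\<lambda>k. \<Sum>i\<in>S. \<bar>C k i\<bar>)"
  have npos: "\<And>k. n k > 0"
  proof -
    fix k
    obtain i where "i \<in> S" "C k i \<noteq> 0" using C by blast
    then show "n k > 0" unfolding n_def using sum_abs_pos[OF fS] by blast
  qed
  define a where "a = (\<lambda>k i. C k i / n k)"
  have abd: "\<forall>k. \<forall>i\<in>S. \<bar>a k i\<bar> \<le> 1"
  proof (intro allI ballI)
    fix k i assume i: "i \<in> S"
    have "\<bar>C k i\<bar> \<le> n k" unfolding n_def using fS i by (intro member_le_sum) auto
    then have "\<bar>C k i\<bar> / n k \<le> 1" using npos[of k] by (simp add: pos_divide_le_eq)
    moreover have "\<bar>a k i\<bar> = \<bar>C k i\<bar> / n k" using npos[of k] unfolding a_def by (simp add: abs_divide)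
    ultimately show "\<bar>a k i\<bar> \<le> 1" by simp
  qed
  have asum: "\<And>k. (\<Sum>i\<in>S. \<bar>a k i\<bar>) = 1"
  proof -
    fix k
    have "\<And>i. \<bar>a k i\<bar> = \<bar>C k i\<bar> / n k" using npos[of k] unfolding a_def by (simp add: abs_divide)
    then have "(\<Sum>i\<in>S. \<bar>a k i\<bar>) = (\<Sum>i\<in>S. \<bar>C k i\<bar> / n k)" by simp
    also have "\<dots> = (\<Sum>i\<in>S. \<bar>C k i\<bar>) / n k" by (simp add: sum_divide_distrib)
    finally have "(\<Sum>i\<in>S. \<bar>a k i\<bar>) = (\<Sum>i\<in>S. \<bar>C k i\<bar>) / n k" .
    then show "(\<Sum>i\<in>S. \<bar>a k i\<bar>) = 1" using npos[of k] by (simp add: n_def)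
  qed
  have azero: "\<And>k. (\<Sum>i\<in>S. a k i *\<^sub>R V k i) = 0"
  proof -
    fix k
    have "(\<Sum>i\<in>S. a k i *\<^sub>R V k i) = (1 / n k) *\<^sub>R (\<Sum>i\<in>S. C k i *\<^sub>R V k i)"
      by (simp add: a_def scaleR_sum_right divide_inverse_commute)
    then show "(\<Sum>i\<in>S. a k i *\<^sub>R V k i) = 0" using C by simp
  qed
  obtain r g where rg: "strict_mono r" "\<forall>i\<in>S. (\<lambda>k. a (r k) i) \<longlonglongrightarrow> g i"
    using compact_fin[OF fS abd] by blast
  have limr: "\<forall>i\<in>S. (\<lambda>k. V (r k) i) \<longlonglongrightarrow> Vb i"
  proof
    fix i assume "i \<in> S"
    then have "((\<lambda>k. V k i) \<circ> r) \<longlonglongrightarrow> Vb i" using lim rg(1) by (intro LIMSEQ_subseq_LIMSEQ) auto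
    then show "(\<lambda>k. V (r k) i) \<longlonglongrightarrow> Vb i" by (simp add: o_def)
  qed
  have "(\<lambda>k. \<Sum>i\<in>S. \<bar>a (r k) i\<bar>) \<longlonglongrightarrow> (\<Sum>i\<in>S. \<bar>g i\<bar>)"
    using rg(2) by (intro tendsto_sum tendsto_rabs) auto
  then have "(\<lambda>k. 1::real) \<longlonglongrightarrow> (\<Sum>i\<in>S. \<bar>g i\<bar>)" using asum by simp
  then have gs: "(\<Sum>i\<in>S. \<bar>g i\<bar>) = 1" using LIMSEQ_unique tendsto_const by blast
  have "(\<lambda>k. \<Sum>i\<in>S. a (r k) i *\<^sub>R V (r k) i) \<longlonglongrightarrow> (\<Sum>i\<in>S. g i *\<^sub>R Vb i)"
    using rg(2) limr by (intro tendsto_sum tendsto_scaleR) auto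
  then have "(\<lambda>k. 0::'a) \<longlonglongrightarrow> (\<Sum>i\<in>S. g i *\<^sub>R Vb i)" using azero by simp
  then have g0: "(\<Sum>i\<in>S. g i *\<^sub>R Vb i) = 0" using LIMSEQ_unique tendsto_const by blast
  have "\<exists>i\<in>S. g i \<noteq> 0"
  proof (rule ccontr)
    assume "\<not> ?thesis"
    then have "(\<Sum>i\<in>S. \<bar>g i\<bar>) = 0" by simp
    then show False using gs by simp
  qed
  then show ?thesis unfolding lindep_fam_def using g0 by blast
qed



lemma main_seq:
  fixes G :: "nat \<Rightarrow> 'a::euclidean_space \<Rightarrow> real" and G' :: "nat \<Rightarrow> 'a \<Rightarrow> 'a"
    and w :: "nat \<Rightarrow> 'a" and u :: "nat \<Rightarrow> 'a" and z :: "nat \<Rightarrow> nat \<Rightarrow> real"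
  assumes wlim: "w \<longlonglongrightarrow> wb" and ulim: "u \<longlonglongrightarrow> v"
    and uM: "\<forall>k. u k \<in> Mset m1 m2 G G' D (w k) (z k)"
    and inact: "\<forall>k. \<forall>i\<in>{1..m1} - Iact m1 G wb. G i (w k) - z k i < 0"
    and S: "S \<subseteq> Jset m1 m2"
    and indk: "\<forall>k. \<not> lindep_fam S (\<lambda>i. G' i (w k))"
    and dimk: "\<forall>k. dim ((\<lambda>i. G' i (w k)) ` Jset m1 m2) \<le> card S"
    and G'c: "\<forall>i\<in>Iact m1 G wb \<union> S. (\<lambda>k. G' i (w k)) \<longlonglongrightarrow> G' i wb"
    and wbD: "wb \<in> D"
    and Gwb: "Gvec (m1+m2) G wb \<in> Cset m1 m2"
    and H3: "\<forall>I \<subseteq> Iact m1 G wb. \<forall>l eta.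
           (\<forall>i\<in>I. l i \<ge> 0) \<and> (\<exists>i\<in>I \<union> S. l i \<noteq> 0) \<and> eta \<in> ncone_lim D wb \<and>
           (\<Sum>i\<in>I \<union> S. l i *\<^sub>R G' i wb) + eta = 0 \<longrightarrow>
           (\<exists>U V. open U \<and> wb \<in> U \<and> open V \<and> eta \<in> V \<and>
              (\<forall>w\<in>U. \<forall>e\<in>ncone_lim D w \<inter> V.
                 (e \<noteq> 0 \<longrightarrow> lindep_with (I \<union> S) (\<lambda>i. G' i w) e) \<and>
                 (e = 0 \<longrightarrow> lindep_fam (I \<union> S) (\<lambda>i. G' i w))))"
  shows "v \<in> Mset m1 m2 G G' D wb (\<lambda>_. 0)"
proof -
  define Ia where "Ia = Iact m1 G wb"
  have Ia: "Ia \<subseteq> {1..m1}" by (auto simp: Ia_def Iact_def)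
  have fIa: "finite Ia" using Ia finite_subset by blast
  have fJ: "finite (Jset m1 m2)" by (simp add: Jset_def)
  have fS: "finite S" using S fJ finite_subset by blast
  define K where "K = Ia \<union> S"
  have fK: "finite K" using fIa fS by (simp add: K_def)
  have n0K: "0 \<notin> K" using Ia S by (auto simp: K_def Jset_def)
  define Q where "Q = (\<lambda>k P c \<eta>. P \<subseteq> Ia \<and> (\<forall>i\<in>Ia. c i \<ge> (0::real)) \<and> (\<forall>i\<in>Ia - P. c i = 0) \<and> \<eta> \<in> ncone_lim D (w k) \<and>
     u k = (\<Sum>i\<in>Ia\<union>S. c i *\<^sub>R G' i (w k)) + \<eta> \<and> \<not> lindep_fam (P\<union>S) (\<lambda>i. G' i (w k)) \<and>
     (\<eta> \<noteq> 0 \<longrightarrow> (\<forall>s>0. \<not> lindep_with (P\<union>S) (\<lambda>i. G' i (w k)) (s *\<^sub>R \<eta>))))"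
  have "\<forall>k. \<exists>P c \<eta>. Q k P c \<eta>"
  proof
    fix k
    have h1: "u k \<in> Mset m1 m2 G G' D (w k) (z k)" using uM by blast
    have h2: "\<forall>i\<in>{1..m1} - Ia. G i (w k) - z k i < 0" using inact by (simp add: Ia_def)
    have h3: "\<not> lindep_fam S (\<lambda>i. G' i (w k))" using indk by blast
    have h4: "dim ((\<lambda>i. G' i (w k)) ` Jset m1 m2) \<le> card S" using dimk by blast
    show "\<exists>P c \<eta>. Q k P c \<eta>" unfolding Q_def
      by (rule rep_k[OF h1 h2 Ia S h3 h4])
  qed
  then have "\<exists>P. \<forall>k. \<exists>c \<eta>. Q k (P k) c \<eta>" by (rule choice)
  then obtain P where "\<forall>k. \<exists>c \<eta>. Q k (P k) c \<eta>" by blast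
  then have "\<exists>c. \<forall>k. \<exists>\<eta>. Q k (P k) (c k) \<eta>" by (rule choice)
  then obtain c where "\<forall>k. \<exists>\<eta>. Q k (P k) (c k) \<eta>" by blast
  then have "\<exists>\<eta>. \<forall>k. Q k (P k) (c k) (\<eta> k)" by (rule choice)
  then obtain \<eta> where Qk: "\<forall>k. Q k (P k) (c k) (\<eta> k)" by blast
  have PIa: "\<And>k. P k \<subseteq> Ia" using Qk by (simp add: Q_def)
  have cpos: "\<And>k i. i \<in> Ia \<Longrightarrow> c k i \<ge> 0" using Qk by (simp add: Q_def)
  have czero: "\<And>k i. i \<in> Ia - P k \<Longrightarrow> c k i = 0" using Qk by (simp add: Q_def)
  have etain: "\<And>k. \<eta> k \<in> ncone_lim D (w k)" using Qk by (simp add: Q_def)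
  have ueq: "\<And>k. u k = (\<Sum>i\<in>K. c k i *\<^sub>R G' i (w k)) + \<eta> k" using Qk by (simp add: Q_def K_def)
  have ind1: "\<And>k. \<not> lindep_fam (P k\<union>S) (\<lambda>i. G' i (w k))" using Qk by (simp add: Q_def)
  have ind2: "\<And>k s. \<eta> k \<noteq> 0 \<Longrightarrow> s > 0 \<Longrightarrow> \<not> lindep_with (P k\<union>S) (\<lambda>i. G' i (w k)) (s *\<^sub>R \<eta> k)"
    using Qk by (simp add: Q_def)
  obtain r1 :: "nat \<Rightarrow> nat" and P0 where r1: "strict_mono r1" "\<forall>k. P (r1 k) = P0"
    using pigeon_subseq[of "Pow Ia" P] fIa PIa by blast
  define t where "t = (\<lambda>k. \<Sum>i\<in>K. \<bar>c k i\<bar>)"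
  define s where "s = (\<lambda>k. 1 + t k)"
  have tnn: "\<And>k. t k \<ge> 0" unfolding t_def by (simp add: sum_nonneg)
  have spos: "\<And>k. s k > 0" "\<And>k. s k \<ge> 1" using tnn by (auto simp: s_def add_pos_nonneg)
  define f where "f = (\<lambda>k i. if i = 0 then 1 / s (r1 k) else c (r1 k) i / s (r1 k))"
  have fbd: "\<forall>k. \<forall>i\<in>insert 0 K. \<bar>f k i\<bar> \<le> 1"
  proof (intro allI ballI)
    fix k i assume i: "i \<in> insert 0 K"
    show "\<bar>f k i\<bar> \<le> 1"
    proof (cases "i = 0")
      case True
      then show ?thesis using spos[of "r1 k"] by (simp add: f_def)
    next
      case False
      then have iK: "i \<in> K" using i by simp
      have "\<bar>c (r1 k) i\<bar> \<le> t (r1 k)" unfolding t_def using fK iK by (intro member_le_sum) auto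
      then have "\<bar>c (r1 k) i\<bar> \<le> s (r1 k)" by (simp add: s_def)
      then have "\<bar>c (r1 k) i\<bar> / s (r1 k) \<le> 1" using spos(1)[of "r1 k"] by (simp add: pos_divide_le_eq)
      moreover have "\<bar>f k i\<bar> = \<bar>c (r1 k) i\<bar> / s (r1 k)"
        using spos(1)[of "r1 k"] False unfolding f_def by (simp add: abs_divide)
      ultimately show ?thesis by simp
    qed
  qed
  obtain r2 g where rg: "strict_mono r2" "\<forall>i\<in>insert 0 K. (\<lambda>k. f (r2 k) i) \<longlonglongrightarrow> g i"
    using compact_fin[of "insert 0 K" f 1] fK fbd by blast
  define R where "R = r1 \<circ> r2"
  have R: "strict_mono R" using r1(1) rg(1) by (simp add: R_def strict_mono_o)
  define \<sigma> where "\<sigma> = g 0"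
  have sig: "(\<lambda>k. 1 / s (R k)) \<longlonglongrightarrow> \<sigma>"
    using rg(2) unfolding \<sigma>_def by (auto simp: f_def R_def)
  have alim: "\<And>i. i \<in> K \<Longrightarrow> (\<lambda>k. c (R k) i / s (R k)) \<longlonglongrightarrow> g i"
  proof -
    fix i assume i: "i \<in> K"
    then have "i \<noteq> 0" using n0K by metis
    then have "\<And>k. f (r2 k) i = c (R k) i / s (R k)" by (simp add: f_def R_def)
    then show "(\<lambda>k. c (R k) i / s (R k)) \<longlonglongrightarrow> g i" using rg(2) i by auto
  qed
  have wR: "(\<lambda>k. w (R k)) \<longlonglongrightarrow> wb" using LIMSEQ_subseq_LIMSEQ[OF wlim R] by (simp add: o_def)
  have uR: "(\<lambda>k. u (R k)) \<longlonglongrightarrow> v" using LIMSEQ_subseq_LIMSEQ[OF ulim R] by (simp add: o_def)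
  have G'R: "\<And>i. i \<in> K \<Longrightarrow> (\<lambda>k. G' i (w (R k))) \<longlonglongrightarrow> G' i wb"
  proof -
    fix i assume "i \<in> K"
    then have "(\<lambda>k. G' i (w k)) \<longlonglongrightarrow> G' i wb" using G'c by (auto simp: K_def Ia_def)
    from LIMSEQ_subseq_LIMSEQ[OF this R] show "(\<lambda>k. G' i (w (R k))) \<longlonglongrightarrow> G' i wb" by (simp add: o_def)
  qed
  have PR: "\<And>k. P (R k) = P0" using r1(2) by (simp add: R_def)
  have P0Ia: "P0 \<subseteq> Ia" using PIa[of "R 0"] PR[of 0] by simp
  have sig0: "\<sigma> \<ge> 0"
    using sig by (rule LIMSEQ_le_const) (use spos in \<open>auto intro!: exI[of _ 0] less_imp_le\<close>)
  have apos: "\<And>i. i \<in> Ia \<Longrightarrow> g i \<ge> 0"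
  proof -
    fix i assume i: "i \<in> Ia"
    then have "i \<in> K" by (simp add: K_def)
    from alim[OF this] show "g i \<ge> 0"
      by (rule LIMSEQ_le_const) (use cpos spos i in \<open>auto intro!: exI[of _ 0] divide_nonneg_pos\<close>)
  qed
  have azero: "\<And>i. i \<in> Ia - P0 \<Longrightarrow> g i = 0"
  proof -
    fix i assume i: "i \<in> Ia - P0"
    then have iK: "i \<in> K" by (simp add: K_def)
    have z0: "\<And>k. c (R k) i / s (R k) = 0" using czero[of i "R _"] PR i by simp
    have "(\<lambda>k. c (R k) i / s (R k)) \<longlonglongrightarrow> g i" by (rule alim[OF iK])
    then have "(\<lambda>k. 0::real) \<longlonglongrightarrow> g i" unfolding z0 .
    then show "g i = 0" using LIMSEQ_unique tendsto_const by blast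
  qed
  have etaR: "\<And>k. \<eta> (R k) = u (R k) - (\<Sum>i\<in>K. c (R k) i *\<^sub>R G' i (w (R k)))"
    using ueq by (simp add: algebra_simps)
  show ?thesis
  proof (cases "\<sigma> > 0")
    case True
    define lam where "lam = (\<lambda>i. g i / \<sigma>)"
    have clim: "\<And>i. i \<in> K \<Longrightarrow> (\<lambda>k. c (R k) i) \<longlonglongrightarrow> lam i"
    proof -
      fix i assume i: "i \<in> K"
      have "(\<lambda>k. (c (R k) i / s (R k)) / (1 / s (R k))) \<longlonglongrightarrow> g i / \<sigma>"
        using alim[OF i] sig True by (intro tendsto_divide) auto
      moreover have "\<And>k. (c (R k) i / s (R k)) / (1 / s (R k)) = c (R k) i"
      proof -
        fix k
        have "s (R k) \<noteq> 0" using spos(1)[of "R k"] by simp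
        then show "(c (R k) i / s (R k)) / (1 / s (R k)) = c (R k) i" by simp
      qed
      ultimately show "(\<lambda>k. c (R k) i) \<longlonglongrightarrow> lam i" by (simp add: lam_def)
    qed
    define etab where "etab = v - (\<Sum>i\<in>K. lam i *\<^sub>R G' i wb)"
    have "(\<lambda>k. u (R k) - (\<Sum>i\<in>K. c (R k) i *\<^sub>R G' i (w (R k)))) \<longlonglongrightarrow> etab"
      unfolding etab_def using uR clim G'R by (intro tendsto_diff tendsto_sum tendsto_scaleR) auto
    then have "(\<lambda>k. \<eta> (R k)) \<longlonglongrightarrow> etab" using etaR by simp
    then have etab_in: "etab \<in> ncone_lim D wb"
      using ncone_lim_closed[OF wR _ _ wbD] etain by blast
    have lampos: "\<forall>i\<in>Ia. lam i \<ge> 0" using apos True by (simp add: lam_def)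
    define l where "l = (\<lambda>i. if i \<in> Ia \<union> S then lam i else 0)"
    have nb: "l \<in> ncone_conv (m1+m2) (Cset m1 m2) (Gvec (m1+m2) G wb - (\<lambda>_. 0))"
      "adjG (m1+m2) G' wb l = (\<Sum>i\<in>Ia\<union>S. lam i *\<^sub>R G' i wb)"
      using nc_build(1)[OF Gwb Ia_def S lampos] nc_build(2)[where G'=G', OF Gwb Ia_def S lampos]
      unfolding l_def by auto
    have "v = adjG (m1+m2) G' wb l + etab" using nb(2) by (simp add: etab_def K_def)
    then show ?thesis unfolding Mset_def using nb(1) etab_in by blast
  next
    case False
    then have s0: "\<sigma> = 0" using sig0 by simp
    define e where "e = (\<lambda>k. (1 / s (R k)) *\<^sub>R \<eta> (R k))"
    have ein: "\<And>k. e k \<in> ncone_lim D (w (R k))"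
      unfolding e_def using etain spos(1) by (intro ncone_lim_scale) (auto intro: less_imp_le)
    have eeq: "\<And>k. e k = (1 / s (R k)) *\<^sub>R u (R k) - (\<Sum>i\<in>K. (c (R k) i / s (R k)) *\<^sub>R G' i (w (R k)))"
      unfolding e_def etaR by (simp add: scaleR_diff_right scaleR_sum_right)
    define etab where "etab = 0 *\<^sub>R v - (\<Sum>i\<in>K. g i *\<^sub>R G' i wb)"
    have "(\<lambda>k. (1 / s (R k)) *\<^sub>R u (R k) - (\<Sum>i\<in>K. (c (R k) i / s (R k)) *\<^sub>R G' i (w (R k)))) \<longlonglongrightarrow> etab"
      unfolding etab_def using sig s0 uR alim G'R by (intro tendsto_diff tendsto_sum tendsto_scaleR) auto
    moreover have "e = (\<lambda>k. (1 / s (R k)) *\<^sub>R u (R k) - (\<Sum>i\<in>K. (c (R k) i / s (R k)) *\<^sub>R G' i (w (R k))))"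
      using eeq by (intro ext)
    ultimately have elim: "e \<longlonglongrightarrow> etab" by simp
    have etab_in: "etab \<in> ncone_lim D wb"
      using ncone_lim_closed[OF wR elim _ wbD] ein by blast
    have gsum: "(\<Sum>i\<in>K. \<bar>g i\<bar>) = 1"
    proof -
      have "(\<lambda>k. \<Sum>i\<in>K. \<bar>c (R k) i / s (R k)\<bar>) \<longlonglongrightarrow> (\<Sum>i\<in>K. \<bar>g i\<bar>)"
        using alim by (intro tendsto_sum tendsto_rabs) auto
      moreover have "\<And>k. (\<Sum>i\<in>K. \<bar>c (R k) i / s (R k)\<bar>) = 1 - 1 / s (R k)"
      proof -
        fix k
        have as: "\<bar>s (R k)\<bar> = s (R k)" using spos(1)[of "R k"] by simp
        have pw: "\<And>i. \<bar>c (R k) i / s (R k)\<bar> = \<bar>c (R k) i\<bar> / s (R k)"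
          by (simp only: abs_divide as)
        have "(\<Sum>i\<in>K. \<bar>c (R k) i / s (R k)\<bar>) = (\<Sum>i\<in>K. \<bar>c (R k) i\<bar> / s (R k))"
          by (rule sum.cong[OF refl pw])
        also have "\<dots> = t (R k) / s (R k)" by (simp add: t_def sum_divide_distrib)
        also have "\<dots> = 1 - 1 / s (R k)" using spos(1)[of "R k"] by (simp add: s_def field_simps)
        finally show "(\<Sum>i\<in>K. \<bar>c (R k) i / s (R k)\<bar>) = 1 - 1 / s (R k)" .
      qed
      ultimately have "(\<lambda>k. 1 - 1 / s (R k)) \<longlonglongrightarrow> (\<Sum>i\<in>K. \<bar>g i\<bar>)" by simp
      moreover have "(\<lambda>k. 1 - 1 / s (R k)) \<longlonglongrightarrow> 1 - 0" using sig s0 by (intro tendsto_diff) auto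
      ultimately show ?thesis using LIMSEQ_unique by fastforce
    qed
    have P0S: "P0 \<union> S \<subseteq> K" using P0Ia by (auto simp: K_def)
    have sumP: "(\<Sum>i\<in>K. g i *\<^sub>R h i) = (\<Sum>i\<in>P0 \<union> S. g i *\<^sub>R h i)" for h :: "nat \<Rightarrow> 'a"
    proof (rule sum.mono_neutral_cong_right[OF fK P0S])
      show "\<forall>i\<in>K - (P0 \<union> S). g i *\<^sub>R h i = 0"
      proof
        fix i assume "i \<in> K - (P0 \<union> S)"
        then have "i \<in> Ia - P0" by (auto simp: K_def)
        then show "g i *\<^sub>R h i = 0" using azero by simp
      qed
    qed (rule refl)
    have ex: "\<exists>i\<in>P0 \<union> S. g i \<noteq> 0"
    proof (rule ccontr)
      assume "\<not> ?thesis"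
      then have "\<forall>i\<in>K. g i = 0" using azero by (auto simp: K_def)
      then have "(\<Sum>i\<in>K. \<bar>g i\<bar>) = 0" by simp
      then show False using gsum by simp
    qed
    have gpos: "\<forall>i\<in>P0. g i \<ge> 0" using apos P0Ia by auto
    have zero: "(\<Sum>i\<in>P0 \<union> S. g i *\<^sub>R G' i wb) + etab = 0"
      using sumP[of "\<lambda>i. G' i wb"] by (simp add: etab_def)
    have P0Iact: "P0 \<subseteq> Iact m1 G wb" using P0Ia by (simp add: Ia_def)
    obtain U V where UV: "open U" "wb \<in> U" "open V" "etab \<in> V"
      "\<forall>w\<in>U. \<forall>e\<in>ncone_lim D w \<inter> V.
                 (e \<noteq> 0 \<longrightarrow> lindep_with (P0 \<union> S) (\<lambda>i. G' i w) e) \<and>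
                 (e = 0 \<longrightarrow> lindep_fam (P0 \<union> S) (\<lambda>i. G' i w))"
      using H3[rule_format, OF P0Iact, of g etab] gpos ex etab_in zero by blast
    have "eventually (\<lambda>k. w (R k) \<in> U) sequentially" using topological_tendstoD[OF wR UV(1,2)] .
    moreover have "eventually (\<lambda>k. e k \<in> V) sequentially" using topological_tendstoD[OF elim UV(3,4)] .
    ultimately have "eventually (\<lambda>k. w (R k) \<in> U \<and> e k \<in> V) sequentially" by (rule eventually_conj)
    then obtain N where "\<forall>k\<ge>N. w (R k) \<in> U \<and> e k \<in> V" unfolding eventually_sequentially by blast
    then have NU: "w (R N) \<in> U" "e N \<in> V" by auto
    have eNin: "e N \<in> ncone_lim D (w (R N)) \<inter> V" using ein NU(2) by simp
    have False
    proof (cases "e N = 0")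
      case True
      then have "lindep_fam (P0 \<union> S) (\<lambda>i. G' i (w (R N)))" using UV(5) NU(1) eNin by blast
      then show False using ind1[of "R N"] PR[of N] by simp
    next
      case False
      then have "lindep_with (P0 \<union> S) (\<lambda>i. G' i (w (R N))) (e N)" using UV(5) NU(1) eNin by blast
      moreover have "\<eta> (R N) \<noteq> 0" using False by (simp add: e_def)
      ultimately show False using ind2[of "R N" "1 / s (R N)"] spos(1)[of "R N"] PR[of N]
        by (simp add: e_def)
    qed
    then show ?thesis by simp
  qed
qed



theorem mainTheorem1:
  fixes G :: "nat \<Rightarrow> 'a::euclidean_space \<Rightarrow> real"
    and G' :: "nat \<Rightarrow> 'a \<Rightarrow> 'a"
    and D :: "'a set"
    and m1 m2 :: nat
    and wb :: 'a
  assumes "\<forall>i\<in>{1..m1+m2}. \<forall>w. (G i has_derivative (\<lambda>h. G' i w \<bullet> h)) (at w)"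
    and "\<forall>i\<in>{1..m1+m2}. continuous_on UNIV (G' i)"
    and "closed D" and "D \<noteq> {}"
    and "Gvec (m1+m2) G wb \<in> Cset m1 m2" and "wb \<in> D"
    and "RCPLD m1 m2 G G' D wb"
  shows "AM_regular m1 m2 G G' D wb"
proof -
  let ?J = "Jset m1 m2"
  define Ia where "Ia = Iact m1 G wb"
  note R = assms(7)[unfolded RCPLD_def]
  from R obtain U0 where U0: "open U0" "wb \<in> U0"
    "\<forall>w\<in>U0. dim ((\<lambda>i. G' i w) ` ?J) = dim ((\<lambda>i. G' i wb) ` ?J)"
    by (elim conjE exE) (rule that)
  from R obtain S where S: "S \<subseteq> ?J" "\<not> lindep_fam S (\<lambda>i. G' i wb)"
    "span ((\<lambda>i. G' i wb) ` S) = span ((\<lambda>i. G' i wb) ` ?J)"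
    and H3: "\<forall>I \<subseteq> Iact m1 G wb. \<forall>l eta.
           (\<forall>i\<in>I. l i \<ge> 0) \<and> (\<exists>i\<in>I \<union> S. l i \<noteq> 0) \<and> eta \<in> ncone_lim D wb \<and>
           (\<Sum>i\<in>I \<union> S. l i *\<^sub>R G' i wb) + eta = 0 \<longrightarrow>
           (\<exists>U V. open U \<and> wb \<in> U \<and> open V \<and> eta \<in> V \<and>
              (\<forall>w\<in>U. \<forall>e\<in>ncone_lim D w \<inter> V.
                 (e \<noteq> 0 \<longrightarrow> lindep_with (I \<union> S) (\<lambda>i. G' i w) e) \<and>
                 (e = 0 \<longrightarrow> lindep_fam (I \<union> S) (\<lambda>i. G' i w))))"
    by (elim conjE exE) (rule that)
  have fJ: "finite ?J" by (simp add: Jset_def)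
  have fS: "finite S" using S(1) fJ finite_subset by blast
  have dimwb: "dim ((\<lambda>i. G' i wb) ` ?J) = card S" by (rule dim_wb[OF fS S(2,3)])
  have Ia: "Ia \<subseteq> {1..m1}" by (auto simp: Ia_def Iact_def)
  have IaS: "Ia \<union> S \<subseteq> {1..m1+m2}" using Ia S(1) by (auto simp: Jset_def)
  have Gcont: "isCont (G i) x" if "i \<in> {1..m1+m2}" for i x
    using assms(1) that by (intro has_derivative_continuous) blast
  have G'cont: "isCont (G' i) x" if "i \<in> {1..m1+m2}" for i x
    using assms(2) that continuous_on_eq_continuous_at[OF open_UNIV] by blast
  have Gneg: "G i wb < 0" if "i \<in> {1..m1} - Ia" for i
  proof -
    have "Gvec (m1+m2) G wb i \<le> 0" using assms(5) that by (auto simp: Cset_def)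
    then have "G i wb \<le> 0" using that by (simp add: Gvec_def)
    moreover have "G i wb \<noteq> 0" using that by (auto simp: Ia_def Iact_def)
    ultimately show ?thesis by simp
  qed
  show ?thesis unfolding AM_regular_def
  proof (rule subsetI)
    fix v assume "v \<in> {v. \<exists>w z u. w \<longlonglongrightarrow> wb \<and> (\<forall>k. z k \<in> Ycar (m1 + m2)) \<and>
          (\<forall>i. (\<lambda>k. z k i) \<longlonglongrightarrow> 0) \<and> u \<longlonglongrightarrow> v \<and>
          (\<forall>k. u k \<in> Mset m1 m2 G G' D (w k) (z k))}"
    then obtain w z u where wzu: "w \<longlonglongrightarrow> wb" "\<forall>i. (\<lambda>k. z k i) \<longlonglongrightarrow> 0" "u \<longlonglongrightarrow> v"
      "\<forall>k. u k \<in> Mset m1 m2 G G' D (w k) (z k)"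
      by blast
    have G'c: "(\<lambda>k. G' i (w k)) \<longlonglongrightarrow> G' i wb" if "i \<in> {1..m1+m2}" for i
      using isCont_tendsto_compose[OF G'cont[OF that] wzu(1)] .
    have ev1: "eventually (\<lambda>k. w k \<in> U0) sequentially"
      using topological_tendstoD[OF wzu(1) U0(1,2)] .
    have ev2: "eventually (\<lambda>k. \<forall>i\<in>{1..m1} - Ia. G i (w k) - z k i < 0) sequentially"
    proof (rule eventually_ball_finite)
      show "finite ({1..m1} - Ia)" by simp
      show "\<forall>i\<in>{1..m1} - Ia. eventually (\<lambda>k. G i (w k) - z k i < 0) sequentially"
      proof
        fix i assume i: "i \<in> {1..m1} - Ia"
        then have im: "i \<in> {1..m1+m2}" by auto
        have "(\<lambda>k. G i (w k) - z k i) \<longlonglongrightarrow> G i wb - 0"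
          using isCont_tendsto_compose[OF Gcont[OF im] wzu(1)] wzu(2) by (intro tendsto_diff) auto
        moreover have "G i wb - 0 < 0" using Gneg[OF i] by simp
        ultimately show "eventually (\<lambda>k. G i (w k) - z k i < 0) sequentially"
          by (rule order_tendstoD(2))
      qed
    qed
    have ev3: "eventually (\<lambda>k. \<not> lindep_fam S (\<lambda>i. G' i (w k))) sequentially"
    proof (rule ccontr)
      assume "\<not> ?thesis"
      then have "\<forall>N. \<exists>n\<ge>N. lindep_fam S (\<lambda>i. G' i (w n))"
        unfolding eventually_sequentially by auto
      then have "infinite {n. lindep_fam S (\<lambda>i. G' i (w n))}"
        unfolding infinite_nat_iff_unbounded_le by simp
      from infinite_enumerate[OF this] obtain r :: "nat \<Rightarrow> nat" where
        r: "strict_mono r \<and> (\<forall>n. r n \<in> {n. lindep_fam S (\<lambda>i. G' i (w n))})" ..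
      have lim: "\<forall>i\<in>S. (\<lambda>k. (\<lambda>i. G' i (w (r k))) i) \<longlonglongrightarrow> G' i wb"
      proof
        fix i assume "i \<in> S"
        then have "i \<in> {1..m1+m2}" using IaS by auto
        from LIMSEQ_subseq_LIMSEQ[OF G'c[OF this]] r show "(\<lambda>k. (\<lambda>i. G' i (w (r k))) i) \<longlonglongrightarrow> G' i wb"
          by (simp add: o_def)
      qed
      have dep: "\<forall>k. lindep_fam S (\<lambda>i. G' i (w (r k)))" using r by simp
      have "lindep_fam S (\<lambda>i. G' i wb)" by (rule lindep_limit[OF fS lim dep])
      then show False using S(2) by simp
    qed
    have "eventually (\<lambda>k. w k \<in> U0 \<and> (\<forall>i\<in>{1..m1} - Ia. G i (w k) - z k i < 0) \<and>
        \<not> lindep_fam S (\<lambda>i. G' i (w k))) sequentially"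
      using ev1 ev2 ev3 by (intro eventually_conj)
    then obtain N where N: "\<forall>k\<ge>N. w k \<in> U0 \<and> (\<forall>i\<in>{1..m1} - Ia. G i (w k) - z k i < 0) \<and>
        \<not> lindep_fam S (\<lambda>i. G' i (w k))"
      unfolding eventually_sequentially by blast
    have N': "w (k + N) \<in> U0" "\<forall>i\<in>{1..m1} - Ia. G i (w (k + N)) - z (k + N) i < 0"
      "\<not> lindep_fam S (\<lambda>i. G' i (w (k + N)))" for k
      using N[rule_format, of "k + N"] by auto
    have h1: "(\<lambda>k. w (k + N)) \<longlonglongrightarrow> wb" using LIMSEQ_ignore_initial_segment[OF wzu(1)] .
    have h2: "(\<lambda>k. u (k + N)) \<longlonglongrightarrow> v" using LIMSEQ_ignore_initial_segment[OF wzu(3)] .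
    have h3: "\<forall>k. u (k + N) \<in> Mset m1 m2 G G' D (w (k + N)) (z (k + N))" using wzu(4) by blast
    have h4: "\<forall>k. \<forall>i\<in>{1..m1} - Iact m1 G wb. G i (w (k + N)) - z (k + N) i < 0"
      using N'(2) by (simp add: Ia_def)
    have h5: "\<forall>k. \<not> lindep_fam S (\<lambda>i. G' i (w (k + N)))" using N'(3) by blast
    have h6: "\<forall>k. dim ((\<lambda>i. G' i (w (k + N))) ` ?J) \<le> card S"
      using U0(3) N'(1) dimwb by simp
    have h7: "\<forall>i\<in>Iact m1 G wb \<union> S. (\<lambda>k. G' i (w (k + N))) \<longlonglongrightarrow> G' i wb"
    proof
      fix i assume "i \<in> Iact m1 G wb \<union> S"
      then have "i \<in> {1..m1+m2}" using IaS by (auto simp: Ia_def)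
      from LIMSEQ_ignore_initial_segment[OF G'c[OF this]]
      show "(\<lambda>k. G' i (w (k + N))) \<longlonglongrightarrow> G' i wb" .
    qed
    show "v \<in> Mset m1 m2 G G' D wb (\<lambda>_. 0)"
      by (rule main_seq[OF h1 h2 h3 h4 S(1) h5 h6 h7 assms(6) assms(5) H3])
  qed
qed


end
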